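(* Let $\epsilon>0$. If $A=(a_n)_{n\ge1}$ is a monotonically increasing sequence of positive integers which is $\epsilon$-complete, then there is a constant $C$ such that $a_n\le\sum_{i\le\epsilon n+C}a_i$ for all positive integers $n$.
   Context: For a sequence $A$ of positive integers, $\Sigma(A)$ is the set of sums of distinct terms of $A$; $A$ is complete if every sufficiently large positive integer lies in $\Sigma(A)$. $A$ is $\epsilon$-complete if every subsequence $A'$ of $A$ with $|A'\cap[n]|\ge\epsilon|A\cap[n]|$ for all sufficiently large $n$ is complete. *)

theory Defs
  imports Complex_Main
begin

text \<open>A sequence A = (a_n)_{n>=1} is a function a :: nat => nat, only the values at
  indices n >= 1 being relevant. A subsequence A' is given by a set I of indices
  (I \<subseteq> {1..}). Terms are counted with multiplicity (by index).\<close>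

definition subsums :: "(nat \<Rightarrow> nat) \<Rightarrow> nat set \<Rightarrow> nat set" where
  "subsums a I = {(\<Sum>i\<in>F. a i) | F. finite F \<and> F \<subseteq> I}"

definition complete_seq :: "(nat \<Rightarrow> nat) \<Rightarrow> nat set \<Rightarrow> bool" where
  "complete_seq a I \<longleftrightarrow> (\<exists>N. \<forall>m\<ge>N. m \<in> subsums a I)"

definition count_le :: "(nat \<Rightarrow> nat) \<Rightarrow> nat set \<Rightarrow> nat \<Rightarrow> nat" where
  "count_le a I n = card {i \<in> I. a i \<le> n}"

definition eps_complete :: "real \<Rightarrow> (nat \<Rightarrow> nat) \<Rightarrow> bool" where
  "eps_complete \<epsilon> a \<longleftrightarrow>
     (\<forall>I. I \<subseteq> {1..} \<longrightarrow>
        (\<exists>N. \<forall>n\<ge>N. real (count_le a I n) \<ge> \<epsilon> * real (count_le a {1..} n))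
        \<longrightarrow> complete_seq a I)"

end

theory Submission
  imports Defs
begin

fun nseq :: "(real \<Rightarrow> nat) \<Rightarrow> nat \<Rightarrow> nat" where
  "nseq g 0 = 0"
| "nseq g (Suc k) = g (real (nseq g k) + 2)"

lemma floor_set:
  assumes "(x::real) \<ge> 0"
  shows "{i::nat. 1 \<le> i \<and> real i \<le> x} = {1..nat \<lfloor>x\<rfloor>}"
proof -
  have "real i \<le> x \<longleftrightarrow> i \<le> nat \<lfloor>x\<rfloor>" for i :: nat
  proof
    assume "real i \<le> x"
    then show "i \<le> nat \<lfloor>x\<rfloor>" by (rule le_nat_floor)
  next
    assume "i \<le> nat \<lfloor>x\<rfloor>"
    then have "real i \<le> real (nat \<lfloor>x\<rfloor>)" by simp
    also have "\<dots> \<le> x" using assms by simp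
    finally show "real i \<le> x" .
  qed
  then show ?thesis unfolding set_eq_iff atLeastAtMost_iff mem_Collect_eq by blast
qed

lemma downset_card:
  fixes a :: "nat \<Rightarrow> nat"
  assumes mono: "\<forall>m n. 1 \<le> m \<longrightarrow> m \<le> n \<longrightarrow> a m \<le> a n"
    and fin: "finite {i \<in> {1..}. a i \<le> x}"
  shows "\<exists>M. {i \<in> {1..}. a i \<le> x} = {1..M}"
proof (cases "{i \<in> {1..}. a i \<le> x} = {}")
  case True
  then show ?thesis by (intro exI[of _ 0]) auto
next
  case False
  let ?S = "{i \<in> {1..}. a i \<le> x}"
  define M where "M = Max ?S"
  have MS: "M \<in> ?S" using False fin M_def Max_in by blast
  have "?S = {1..M}"
  proof
    show "?S \<subseteq> {1..M}" using fin M_def by auto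
    show "{1..M} \<subseteq> ?S"
    proof
      fix i assume "i \<in> {1..M}"
      then have "a i \<le> a M" using mono by auto
      then show "i \<in> ?S" using MS \<open>i \<in> {1..M}\<close> by auto
    qed
  qed
  then show ?thesis by blast
qed

theorem theorem4p1:
  fixes \<epsilon> :: real and a :: "nat \<Rightarrow> nat"
  assumes "\<epsilon> > 0"
    and "\<forall>n\<ge>1. a n > 0"
    and "\<forall>m n. 1 \<le> m \<longrightarrow> m \<le> n \<longrightarrow> a m \<le> a n"
    and "eps_complete \<epsilon> a"
  shows "\<exists>C::real. \<forall>n\<ge>1. a n \<le> (\<Sum>i\<in>{i. 1 \<le> i \<and> real i \<le> \<epsilon> * real n + C}. a i)"
proof (rule ccontr)
  assume neg: "\<not> ?thesis"
  have ex: "\<exists>n. n \<ge> 1 \<and> (\<Sum>i\<in>{i. 1 \<le> i \<and> real i \<le> \<epsilon> * real n + C}. a i) < a n" for C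
    using neg by (meson not_le)
  define g where "g C = (SOME n. n \<ge> 1 \<and> (\<Sum>i\<in>{i. 1 \<le> i \<and> real i \<le> \<epsilon> * real n + C}. a i) < a n)" for C
  have g: "g C \<ge> 1 \<and> (\<Sum>i\<in>{i. 1 \<le> i \<and> real i \<le> \<epsilon> * real (g C) + C}. a i) < a (g C)" for C
    unfolding g_def by (rule someI_ex[OF ex])
  define nn where "nn = nseq g"
  define t where "t k = nat \<lfloor>\<epsilon> * real (nn (Suc k)) + real (nn k) + 2\<rfloor>" for k
  define th where "th k = t k - 1" for k
  have nnS: "nn (Suc k) = g (real (nn k) + 2)" for k by (simp add: nn_def)
  have F1: "nn (Suc k) \<ge> 1 \<and> (\<Sum>i\<in>{1..t k}. a i) < a (nn (Suc k))" for k
  proof -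
    have "{i. 1 \<le> i \<and> real i \<le> \<epsilon> * real (nn (Suc k)) + (real (nn k) + 2)} = {1..t k}"
      unfolding t_def using assms(1) by (subst floor_set) (auto simp: add.assoc)
    then show ?thesis using g[of "real (nn k) + 2"] nnS[of k] by simp
  qed
  have F2: "t k < nn (Suc k)" for k
  proof (rule ccontr)
    assume "\<not> t k < nn (Suc k)"
    then have "nn (Suc k) \<in> {1..t k}" using F1[of k] by auto
    then have "a (nn (Suc k)) \<le> (\<Sum>i\<in>{1..t k}. a i)"
      by (intro member_le_sum) auto
    then show False using F1[of k] by simp
  qed
  have F3: "t k \<ge> nn k + 2" for k
  proof -
    have "real (nn k) + 2 \<le> \<epsilon> * real (nn (Suc k)) + real (nn k) + 2" using assms(1) by simp
    then have "\<lfloor>real (nn k) + 2\<rfloor> \<le> \<lfloor>\<epsilon> * real (nn (Suc k)) + real (nn k) + 2\<rfloor>"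
      by (rule floor_mono)
    then show ?thesis unfolding t_def by linarith
  qed
  have F4: "real (th k) \<ge> \<epsilon> * real (nn (Suc k)) + real (nn k)" for k
  proof -
    have "real_of_int \<lfloor>\<epsilon> * real (nn (Suc k)) + real (nn k) + 2\<rfloor> > \<epsilon> * real (nn (Suc k)) + real (nn k) + 1"
      by linarith
    moreover have "real (t k) = real_of_int \<lfloor>\<epsilon> * real (nn (Suc k)) + real (nn k) + 2\<rfloor>"
      unfolding t_def using assms(1) by simp
    ultimately show ?thesis unfolding th_def using F3[of k] by (simp add: of_nat_diff)
  qed
  have F5: "a (nn (Suc k)) > t k" for k
  proof -
    have "(\<Sum>i\<in>{1..t k}. (1::nat)) \<le> (\<Sum>i\<in>{1..t k}. a i)"
      using assms(2) by (intro sum_mono) (auto simp: Suc_le_eq)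
    then show ?thesis using F1[of k] by simp
  qed
  have eps1: "\<epsilon> < 1"
  proof -
    have "real (t 0) + 1 > \<epsilon> * real (nn 1) + 1"
      using F4[of 0] F3[of 0] unfolding th_def by (simp add: of_nat_diff)
    moreover have "real (t 0) < real (nn 1)" using F2[of 0] by simp
    ultimately have "\<epsilon> * real (nn 1) < real (nn 1)" by linarith
    moreover have "real (nn 1) > 0" using F1[of 0] by simp
    ultimately show ?thesis by simp
  qed
  have smono: "nn k < nn (Suc k)" for k using F2[of k] F3[of k] by simp
  have nnmono: "j \<le> k \<Longrightarrow> nn j \<le> nn k" for j k
    using smono by (meson lift_Suc_mono_le less_imp_le)
  have nnk: "k \<le> nn k" for k
  proof (induction k)
    case 0 show ?case by simp
  next
    case (Suc k) then show ?case using smono[of k] by simp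
  qed
  define I where "I = {i. 1 \<le> i \<and> (\<forall>k. \<not> (th k < i \<and> i < nn (Suc k)))}"
  have thge: "nn k \<le> th k" for k using F3[of k] unfolding th_def by simp
  have thlt: "th k < nn (Suc k)" for k using F2[of k] unfolding th_def by simp
  have memI: "nn k < i \<Longrightarrow> i \<le> th k \<Longrightarrow> i \<in> I" for k i
  proof -
    assume h: "nn k < i" "i \<le> th k"
    have "\<not> (th j < i \<and> i < nn (Suc j))" for j
    proof (cases "j < k")
      case True
      then have "nn (Suc j) \<le> nn k" by (intro nnmono) simp
      then show ?thesis using h by simp
    next
      case False
      show ?thesis
      proof (cases "j = k")
        case True then show ?thesis using h by simp
      next
        case False
        with \<open>\<not> j < k\<close> have "Suc k \<le> j" by simp
        then have "nn (Suc k) \<le> nn j" by (rule nnmono)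
        then show ?thesis using h thlt[of k] thge[of j] by simp
      qed
    qed
    then show "i \<in> I" unfolding I_def using h by simp
  qed
  have notI: "i \<le> th k" if "i \<in> I" "i < nn (Suc k)" for i k
  proof -
    have "\<not> (th k < i \<and> i < nn (Suc k))" using that(1) unfolding I_def by blast
    then show ?thesis using that(2) by simp
  qed
  have dens_k: "\<forall>M \<le> nn k. \<epsilon> * real M \<le> real (card (I \<inter> {1..M}))" for k
  proof (induction k)
    case 0
    then show ?case by (simp add: nn_def)
  next
    case (Suc k)
    show ?case
    proof (intro allI impI)
      fix M assume M: "M \<le> nn (Suc k)"
      show "\<epsilon> * real M \<le> real (card (I \<inter> {1..M}))"
      proof (cases "M \<le> nn k")
        case True then show ?thesis using Suc.IH by simp
      next
        case False
        show ?thesis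
        proof (cases "M \<le> th k")
          case True
          have sub: "(I \<inter> {1..nn k}) \<union> {nn k + 1..M} \<subseteq> I \<inter> {1..M}"
            using True False by (auto intro: memI[of k])
          have "card ((I \<inter> {1..nn k}) \<union> {nn k + 1..M}) = card (I \<inter> {1..nn k}) + card {nn k + 1..M}"
            by (intro card_Un_disjoint) auto
          then have "card (I \<inter> {1..nn k}) + (M - nn k) \<le> card (I \<inter> {1..M})"
            using card_mono[OF _ sub] by simp
          then have "real (card (I \<inter> {1..nn k})) + real M - real (nn k) \<le> real (card (I \<inter> {1..M}))"
            using False by (simp add: of_nat_diff)
          moreover have "\<epsilon> * real (nn k) \<le> real (card (I \<inter> {1..nn k}))" using Suc.IH by simp
          moreover have "\<epsilon> * (real M - real (nn k)) \<le> real M - real (nn k)"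
            using eps1 False assms(1) by (intro mult_left_le_one_le) auto
          ultimately show ?thesis by (simp add: algebra_simps)
        next
          case False2: False
          have sub: "{nn k + 1..th k} \<subseteq> I \<inter> {1..M}"
            using False2 by (auto intro: memI[of k])
          then have "th k - nn k \<le> card (I \<inter> {1..M})"
            using card_mono[OF _ sub] by simp
          then have "real (th k) - real (nn k) \<le> real (card (I \<inter> {1..M}))"
            using thge[of k] by (simp add: of_nat_diff)
          moreover have "\<epsilon> * real M \<le> \<epsilon> * real (nn (Suc k))" using M assms(1) by simp
          ultimately show ?thesis using F4[of k] by linarith
        qed
      qed
    qed
  qed
  have dens: "\<epsilon> * real M \<le> real (card (I \<inter> {1..M}))" for M
    using dens_k[of M] nnk[of M] by simp
  have Isub: "I \<subseteq> {1..}" unfolding I_def by auto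
  have cond: "\<forall>x\<ge>0. real (count_le a I x) \<ge> \<epsilon> * real (count_le a {1..} x)"
  proof (intro allI impI)
    fix x :: nat
    show "real (count_le a I x) \<ge> \<epsilon> * real (count_le a {1..} x)"
    proof (cases "finite {i \<in> {1..}. a i \<le> x}")
      case False
      then show ?thesis unfolding count_le_def by simp
    next
      case True
      then obtain M where M: "{i \<in> {1..}. a i \<le> x} = {1..M}"
        using downset_card[OF assms(3)] by blast
      have "{i \<in> I. a i \<le> x} = I \<inter> {1..M}" using M Isub by blast
      then show ?thesis unfolding count_le_def using M dens[of M] by simp
    qed
  qed
  have "complete_seq a I"
    using assms(4) Isub cond unfolding eps_complete_def by blast
  then obtain N0 where N0: "\<forall>m\<ge>N0. m \<in> subsums a I" unfolding complete_seq_def by blast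
  define N where "N = nn (Suc N0)"
  have aN: "a N > t N0" using F5 N_def by simp
  have "a N - 1 \<ge> N0" using aN F3[of N0] nnk[of N0] by simp
  then have "a N - 1 \<in> subsums a I" using N0 by simp
  then have "\<exists>F. a N - 1 = (\<Sum>i\<in>F. a i) \<and> finite F \<and> F \<subseteq> I"
    unfolding subsums_def by (simp only: mem_Collect_eq)
  then obtain F where F: "finite F" "F \<subseteq> I" "(\<Sum>i\<in>F. a i) = a N - 1"
    by metis
  have N1: "N \<ge> 1" using F1 N_def by simp
  have aNpos: "a N > 0" using assms(2) N1 by simp
  show False
  proof (cases "\<exists>i\<in>F. i \<ge> N")
    case True
    then obtain i where i: "i \<in> F" "i \<ge> N" by blast
    have "a N \<le> a i" using assms(3) N1 i by simp
    also have "a i \<le> (\<Sum>i\<in>F. a i)" using F i by (intro member_le_sum) auto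
    finally show False using F aNpos by simp
  next
    case False
    have "F \<subseteq> {1..th N0}"
    proof
      fix i assume i: "i \<in> F"
      then have iI: "i \<in> I" using F(2) by blast
      have "i < nn (Suc N0)" using False i unfolding N_def by (simp add: not_le)
      then have "i \<le> th N0" using notI iI by blast
      moreover have "1 \<le> i" using iI Isub by auto
      ultimately show "i \<in> {1..th N0}" by simp
    qed
    then have "(\<Sum>i\<in>F. a i) \<le> (\<Sum>i\<in>{1..th N0}. a i)" by (intro sum_mono2) auto
    moreover have "t N0 = Suc (th N0)" using F3[of N0] unfolding th_def by simp
    then have "(\<Sum>i\<in>{1..t N0}. a i) = (\<Sum>i\<in>{1..th N0}. a i) + a (t N0)"
      by simp
    moreover have "a (t N0) > 0" using assms(2) F3[of N0] by simp
    moreover have "(\<Sum>i\<in>{1..t N0}. a i) < a N" using F1 N_def by simp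
    ultimately show False using F by linarith
  qed
qed

end
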